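(* For every convex body $K\subset\mathbb{R}^{n+m}$ and every $u\in W$, $$h_{\Sigma_\pi K}(u)=V_+\big(T_u(K)\big).$$ In particular, if $(-1)K=K$, then $h_{\Sigma_\pi K}(u)=\tfrac12\mathrm{Vol}_{n+1}\big(T_u(K)\big)$.
   Context: A convex body is a non-empty compact convex subset of a real vector space; its support function is $h_L(u)=\max\{\langle u,x\rangle:x\in L\}$. Let $V\subset\mathbb{R}^{n+m}$ be a linear subspace of dimension $n$, $W=V^\perp$, $\pi$ the orthogonal projection onto $V$ (also used for the projection $V\oplus\mathbb{R}\to V$). For $u\in W$, $T_u:=\mathrm{Id}_V\oplus\langle u,\cdot\rangle: V\oplus W\to V\oplus\mathbb{R}$, i.e. $T_u(x+y)=(x,\langle u,y\rangle)$. For a convex body $C\subset V\oplus\mathbb{R}$ its shadow volume is $V_+(C):=\int_{\pi(C)}\varphi(x)\,\mathrm{d}x$ with $\varphi(x)=\sup\{t:(x,t)\in C\}$. For $x\in\pi(K)$ let $K_x:=\{y\in W:x+y\in K\}$; a section is $\gamma:\pi(K)\to W$ with $\gamma(x)\in K_x$; the fiber body is $\Sigma_\pi K:=\{\int_{\pi(K)}\gamma(x)\,\mathrm{d}x:\gamma\text{ Borel measurable section}\}\subset W$, $\mathrm{d}x$ Lebesgue measure on $V$. *)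

theory Defs
  imports "HOL-Analysis.Analysis"
begin

definition convex_body :: "'a::euclidean_space set \<Rightarrow> bool" where
  "convex_body K \<longleftrightarrow> K \<noteq> {} \<and> compact K \<and> convex K"

definition supp_fun :: "'a::real_inner set \<Rightarrow> 'a \<Rightarrow> real" where
  "supp_fun L u = Sup ((\<lambda>x. inner u x) ` L)"

definition orth :: "'a::real_inner set \<Rightarrow> 'a set" where
  "orth V = {y. \<forall>v\<in>V. inner y v = 0}"

definition projV :: "'a::real_inner set \<Rightarrow> 'a \<Rightarrow> 'a" where
  "projV V x = (THE p. p \<in> V \<and> (\<forall>v\<in>V. inner (x - p) v = 0))"

definition Tmap :: "'a::real_inner set \<Rightarrow> 'a \<Rightarrow> 'a \<Rightarrow> 'a \<times> real" where
  "Tmap V u z = (projV V z, inner u (z - projV V z))"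

text \<open>Integral over A (a subset of V = range f) w.r.t. Lebesgue measure on V, where f is a
  linear isometry from R^n onto V (the Lebesgue measure on V is the pushforward of lborel).\<close>
definition int_V :: "(real^'n \<Rightarrow> 'a::euclidean_space) \<Rightarrow> 'a set \<Rightarrow> ('a \<Rightarrow> 'b::{banach,second_countable_topology}) \<Rightarrow> 'b" where
  "int_V f A g = (LINT s:{s. f s \<in> A}|lborel. g (f s))"

definition shadow_volume :: "(real^'n \<Rightarrow> 'a::euclidean_space) \<Rightarrow> ('a \<times> real) set \<Rightarrow> real" where
  "shadow_volume f C = int_V f (fst ` C) (\<lambda>x. Sup {t. (x, t) \<in> C})"

definition fiber :: "'a::real_inner set \<Rightarrow> 'a set \<Rightarrow> 'a \<Rightarrow> 'a set" where
  "fiber V K x = {y \<in> orth V. x + y \<in> K}"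

definition fiber_body :: "'a::euclidean_space set \<Rightarrow> (real^'n \<Rightarrow> 'a) \<Rightarrow> 'a set \<Rightarrow> 'a set" where
  "fiber_body V f K =
     {int_V f (projV V ` K) \<gamma> | \<gamma>.
        \<gamma> \<in> borel_measurable (restrict_space borel (projV V ` K)) \<and>
        (\<forall>x\<in>projV V ` K. \<gamma> x \<in> fiber V K x)}"

definition vol_V1 :: "(real^'n \<Rightarrow> 'a::euclidean_space) \<Rightarrow> ('a \<times> real) set \<Rightarrow> real" where
  "vol_V1 f C = measure lborel {(s, t). (f s, t) \<in> C}"

end

theory Submission
  imports Defs "HOL-Analysis.Analysis"
begin

lemma fiber_max:
  fixes P :: "'a::euclidean_space \<Rightarrow> 'b::euclidean_space" and l :: "'a \<Rightarrow> real"
  assumes K: "compact K" and P: "continuous_on UNIV P" and l: "continuous_on UNIV l"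
    and x: "x \<in> P ` K"
  shows "\<exists>z\<in>K. P z = x \<and> l z = Sup {l z |z. z \<in> K \<and> P z = x} \<and> (\<forall>z'\<in>K. P z' = x \<longrightarrow> l z' \<le> l z)"
proof -
  let ?F = "K \<inter> P -` {x}"
  have cF: "compact ?F"
    using K by (intro compact_Int_closed) (auto intro!: closed_vimage P)
  have ne: "?F \<noteq> {}" using x by auto
  have "compact (l ` ?F)" using cF l by (intro compact_continuous_image) (auto intro: continuous_on_subset)
  then obtain m where m: "m \<in> l ` ?F" "\<forall>y\<in>l ` ?F. y \<le> m"
    using compact_attains_sup[of "l ` ?F"] ne by blast
  then obtain z where z: "z \<in> K" "P z = x" "l z = m" by auto
  have eq: "{l z |z. z \<in> K \<and> P z = x} = l ` ?F" by auto
  have "Sup (l ` ?F) = m" using m by (intro cSup_eq_maximum) auto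
  then show ?thesis using z m eq by auto
qed

lemma fiber_max_meas:
  fixes P :: "'a::euclidean_space \<Rightarrow> 'b::euclidean_space" and l :: "'a \<Rightarrow> real"
  assumes K: "compact K" and P: "continuous_on UNIV P" and l: "continuous_on UNIV l"
  shows "(\<lambda>x. Sup {l z |z. z \<in> K \<and> P z = x}) \<in> borel_measurable (restrict_space borel (P ` K))"
proof (subst borel_measurable_iff_ge, intro allI)
  fix a
  have cPK: "compact (P ` K)" using K P by (intro compact_continuous_image) (auto intro: continuous_on_subset)
  have eq: "{w \<in> space (restrict_space borel (P ` K)). a \<le> Sup {l z |z. z \<in> K \<and> P z = w}}
     = P ` {z\<in>K. a \<le> l z}"
  proof safe
    fix w assume w: "w \<in> space (restrict_space borel (P ` K))" and a: "a \<le> Sup {l z |z. z \<in> K \<and> P z = w}"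
    then have "w \<in> P ` K" by (simp add: space_restrict_space)
    from fiber_max[OF K P l this] obtain z where "z \<in> K" "P z = w" "l z = Sup {l z |z. z \<in> K \<and> P z = w}" by blast
    with a show "w \<in> P ` {z\<in>K. a \<le> l z}" by auto
  next
    fix z assume z: "z \<in> K" "a \<le> l z"
    then show "P z \<in> space (restrict_space borel (P ` K))" by (simp add: space_restrict_space)
    from fiber_max[OF K P l, of "P z"] z obtain z' where "z' \<in> K" "P z' = P z"
      "l z' = Sup {l y |y. y \<in> K \<and> P y = P z}" "\<forall>y\<in>K. P y = P z \<longrightarrow> l y \<le> l z'" by blast
    with z show "a \<le> Sup {l y |y. y \<in> K \<and> P y = P z}" by force
  qed
  have c: "compact {z\<in>K. a \<le> l z}"
    using K by (intro compact_Int_closed[of K "{z. a \<le> l z}", simplified Int_def, simplified])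
      (auto intro!: closed_Collect_le l continuous_on_const)
  have "compact (P ` {z\<in>K. a \<le> l z})" using c P by (intro compact_continuous_image) (auto intro: continuous_on_subset)
  then have "P ` {z\<in>K. a \<le> l z} \<in> sets borel" by (auto intro: borel_closed compact_imp_closed)
  then show "{w \<in> space (restrict_space borel (P ` K)). a \<le> Sup {l z |z. z \<in> K \<and> P z = w}}
     \<in> sets (restrict_space borel (P ` K))"
    unfolding eq using cPK by (subst sets_restrict_space_iff) (auto intro: borel_closed compact_imp_closed)
qed


lemma sel_unique:
  fixes P :: "'a::euclidean_space \<Rightarrow> 'b::euclidean_space" and l :: "'a \<Rightarrow> real"
  assumes cvx: "convex K" and P: "linear P" and l: "linear l" and d: "d > 0"
    and z1: "z1 \<in> K" "P z1 = x" "\<forall>z'\<in>K. P z' = x \<longrightarrow> l z' - d * norm z' ^ 2 \<le> l z1 - d * norm z1 ^ 2"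
    and z2: "z2 \<in> K" "P z2 = x" "\<forall>z'\<in>K. P z' = x \<longrightarrow> l z' - d * norm z' ^ 2 \<le> l z2 - d * norm z2 ^ 2"
  shows "z1 = z2"
proof (rule ccontr)
  assume ne: "z1 \<noteq> z2"
  let ?m = "(1/2) *\<^sub>R z1 + (1/2) *\<^sub>R z2"
  have mK: "?m \<in> K" using cvx z1(1) z2(1) unfolding convex_def by force
  have Pm: "P ?m = x" using z1(2) z2(2) linear_add[OF P] linear_scale[OF P]
    by (metis scaleR_add_right scaleR_half_double)
  have lm: "l ?m = (l z1 + l z2) / 2" using linear_add[OF l] linear_scale[OF l] by simp
  have nm: "norm ?m ^ 2 = (norm z1 ^ 2 + norm z2 ^ 2)/2 - norm (z1 - z2) ^ 2 / 4"
    by (simp add: power2_norm_eq_inner inner_add_left inner_add_right inner_diff_left inner_diff_right inner_commute field_simps)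
  have pos: "norm (z1 - z2) ^ 2 > 0" using ne by simp
  have h1: "l ?m - d * norm ?m ^ 2 \<le> l z1 - d * norm z1 ^ 2" using z1(3) mK Pm by blast
  have h12: "l z2 - d * norm z2 ^ 2 \<le> l z1 - d * norm z1 ^ 2" using z1(3) z2 by blast
  have h21: "l z1 - d * norm z1 ^ 2 \<le> l z2 - d * norm z2 ^ 2" using z2(3) z1 by blast
  have "d * norm (z1 - z2) ^ 2 > 0" using d pos by simp
  moreover have "\<And>a b c l1 l2 :: real. (l1 + l2)/2 - d * ((a + b)/2 - c/4) \<le> l1 - d * a \<Longrightarrow> l1 - d * a = l2 - d * b \<Longrightarrow> d * c > 0 \<Longrightarrow> False"
    by (simp add: field_simps)
  ultimately show False using h1 h12 h21 pos unfolding lm nm by (meson order_antisym)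
qed

definition selG :: "('a::euclidean_space \<Rightarrow> 'b) \<Rightarrow> 'a set \<Rightarrow> ('a \<Rightarrow> real) \<Rightarrow> 'b \<Rightarrow> 'a" where
  "selG P K h x = (THE z. z \<in> K \<and> P z = x \<and> (\<forall>z'\<in>K. P z' = x \<longrightarrow> h z' \<le> h z))"

lemma selG:
  fixes P :: "'a::euclidean_space \<Rightarrow> 'b::euclidean_space" and l :: "'a \<Rightarrow> real"
  assumes K: "compact K" and cvx: "convex K" and P: "linear P" and l: "linear l" and d: "d > 0"
    and x: "x \<in> P ` K"
  defines "h \<equiv> (\<lambda>z. l z - d * norm z ^ 2)"
  shows "selG P K h x \<in> K \<and> P (selG P K h x) = x \<and> (\<forall>z'\<in>K. P z' = x \<longrightarrow> h z' \<le> h (selG P K h x))"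
proof -
  have cP: "continuous_on UNIV P" using P by (simp add: linear_continuous_on linear_conv_bounded_linear)
  have ch: "continuous_on UNIV h" unfolding h_def using l
    by (intro continuous_intros) (auto simp: linear_continuous_on linear_conv_bounded_linear)
  obtain z where z: "z \<in> K" "P z = x" "\<forall>z'\<in>K. P z' = x \<longrightarrow> h z' \<le> h z"
    using fiber_max[OF K cP ch x] by blast
  show ?thesis unfolding selG_def
  proof (rule theI[of _ z])
    show "z \<in> K \<and> P z = x \<and> (\<forall>z'\<in>K. P z' = x \<longrightarrow> h z' \<le> h z)" using z by blast
    fix y assume "y \<in> K \<and> P y = x \<and> (\<forall>z'\<in>K. P z' = x \<longrightarrow> h z' \<le> h y)"
    then show "y = z" using sel_unique[OF cvx P l d, of y x z] z unfolding h_def by blast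
  qed
qed

lemma selG_meas:
  fixes P :: "'a::euclidean_space \<Rightarrow> 'b::euclidean_space" and l :: "'a \<Rightarrow> real"
  assumes K: "compact K" and cvx: "convex K" and P: "linear P" and l: "linear l" and d: "d > 0"
  defines "h \<equiv> (\<lambda>z. l z - d * norm z ^ 2)"
  shows "selG P K h \<in> borel_measurable (restrict_space borel (P ` K))"
proof (rule borel_measurableI)
  have cP: "continuous_on UNIV P" using P by (simp add: linear_continuous_on linear_conv_bounded_linear)
  have ch: "continuous_on UNIV h" unfolding h_def using l
    by (intro continuous_intros) (auto simp: linear_continuous_on linear_conv_bounded_linear)
  have cPK: "compact (P ` K)" using K cP by (intro compact_continuous_image) (auto intro: continuous_on_subset)
  have sel: "\<And>x. x \<in> P ` K \<Longrightarrow> selG P K h x \<in> K \<and> P (selG P K h x) = x \<and> (\<forall>z'\<in>K. P z' = x \<longrightarrow> h z' \<le> h (selG P K h x))"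
    using selG[OF K cvx P l d] unfolding h_def by blast
  fix U :: "'a set" assume U: "open U"
  define C where "C = - U"
  have C: "closed C" using U by (simp add: C_def closed_Compl)
  have KC: "compact (K \<inter> C)" using K C by (rule compact_Int_closed)
  have cPKC: "compact (P ` (K \<inter> C))" using KC cP by (intro compact_continuous_image) (auto intro: continuous_on_subset)
  let ?H = "\<lambda>x. Sup {h z |z. z \<in> K \<and> P z = x}"
  let ?HC = "\<lambda>x. Sup {h z |z. z \<in> K \<inter> C \<and> P z = x}"
  have mH: "?H \<in> borel_measurable (restrict_space borel (P ` (K \<inter> C)))"
    by (rule measurable_restrict_mono[OF fiber_max_meas[OF K cP ch]]) auto
  have mHC: "?HC \<in> borel_measurable (restrict_space borel (P ` (K \<inter> C)))"
    by (rule fiber_max_meas[OF KC cP ch])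
  have s1: "{x \<in> space (restrict_space borel (P ` (K \<inter> C))). ?H x \<le> ?HC x} \<in> sets (restrict_space borel (P ` (K \<inter> C)))"
    using mH mHC by (rule borel_measurable_le)
  then have s2: "{x \<in> P ` (K \<inter> C). ?H x \<le> ?HC x} \<in> sets borel"
    using cPKC by (subst (asm) sets_restrict_space_iff) (auto simp: space_restrict_space intro: borel_closed compact_imp_closed)
  have eq: "{x \<in> P ` K. selG P K h x \<in> C} = {x \<in> P ` (K \<inter> C). ?H x \<le> ?HC x}"
  proof safe
    fix z assume z: "z \<in> K" "selG P K h (P z) \<in> C"
    define g where "g = selG P K h (P z)"
    have zK: "P z \<in> P ` K" using z(1) by (rule imageI)
    have g: "g \<in> K" "P g = P z" "\<forall>z'\<in>K. P z' = P z \<longrightarrow> h z' \<le> h g" using sel[OF zK] unfolding g_def by auto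
    have gC: "g \<in> C" using z(2) unfolding g_def .
    have gKC: "g \<in> K \<inter> C" using g(1) gC by (rule IntI)
    have PzC: "P z \<in> P ` (K \<inter> C)" using gKC g(2) by (metis image_eqI)
    then show "P z \<in> P ` (K \<inter> C)" .
    obtain m where m: "m \<in> K" "P m = P z" "h m = ?H (P z)" using fiber_max[OF K cP ch zK] by blast
    obtain mc where mc: "mc \<in> K \<inter> C" "P mc = P z" "h mc = ?HC (P z)" "\<forall>z'\<in>K \<inter> C. P z' = P z \<longrightarrow> h z' \<le> h mc"
      using fiber_max[OF KC cP ch PzC] by blast
    have "h m \<le> h g" using g(3) m(1,2) by blast
    also have "h g \<le> h mc" using mc(4) gKC g(2) by blast
    finally show "?H (P z) \<le> ?HC (P z)" using m(3) mc(3) by simp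
  next
    fix z assume z: "z \<in> K" "z \<in> C" "?H (P z) \<le> ?HC (P z)"
    have zK: "P z \<in> P ` K" using z(1) by (rule imageI)
    then show "P z \<in> P ` K" .
    have zKC: "P z \<in> P ` (K \<inter> C)" using z(1,2) by blast
    obtain mc where mc: "mc \<in> K \<inter> C" "P mc = P z" "h mc = ?HC (P z)"
      using fiber_max[OF KC cP ch zKC] by blast
    obtain m where m: "m \<in> K" "P m = P z" "h m = ?H (P z)" "\<forall>z'\<in>K. P z' = P z \<longrightarrow> h z' \<le> h m"
      using fiber_max[OF K cP ch zK] by blast
    have mcmax: "\<forall>z'\<in>K. P z' = P z \<longrightarrow> h z' \<le> h mc"
    proof (intro ballI impI)
      fix z' assume "z' \<in> K" "P z' = P z"
      then have "h z' \<le> h m" using m(4) by blast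
      then show "h z' \<le> h mc" using m(3) mc(3) z(3) by linarith
    qed
    define g where "g = selG P K h (P z)"
    have g: "g \<in> K" "P g = P z" "\<forall>z'\<in>K. P z' = P z \<longrightarrow> h z' \<le> h g"
      using sel[OF zK] unfolding g_def by auto
    have mcK: "mc \<in> K" using mc(1) by simp
    have "mc = g"
      using sel_unique[OF cvx P l d mcK mc(2) _ g(1,2)] mcmax g(3) unfolding h_def by blast
    then show "selG P K h (P z) \<in> C" using mc(1) unfolding g_def by simp
  qed
  have "selG P K h -` U \<inter> P ` K = P ` K - {x \<in> P ` K. selG P K h x \<in> C}" by (auto simp: C_def)
  also have "\<dots> \<in> sets borel" unfolding eq using s2 cPK by (auto intro: borel_closed compact_imp_closed)
  finally show "selG P K h -` U \<inter> space (restrict_space borel (P ` K)) \<in> sets (restrict_space borel (P ` K))"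
    using cPK by (subst sets_restrict_space_iff) (auto simp: space_restrict_space intro: borel_closed compact_imp_closed)
qed


locale fbs =
  fixes f :: "real^'n \<Rightarrow> 'a::euclidean_space" and K :: "'a set"
  assumes lin: "linear f" and iso: "\<forall>x. norm (f x) = norm x" and cb: "convex_body K"
begin

definition g where "g = adjoint f"
definition P where "P z = f (g z)"

lemma K: "compact K" "convex K" "K \<noteq> {}" using cb by (auto simp: convex_body_def)

lemma inner_f: "f a \<bullet> f b = a \<bullet> b"
proof -
  have "norm (f (a + b)) ^ 2 = norm (a + b) ^ 2" using iso by simp
  moreover have "norm (f a) ^ 2 = norm a ^ 2" "norm (f b) ^ 2 = norm b ^ 2" using iso by auto
  ultimately show ?thesis
    by (simp add: linear_add[OF lin] power2_norm_eq_inner inner_add_left inner_add_right inner_commute)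
qed

lemma linP: "linear g" "linear P"
proof -
  show lg: "linear g" unfolding g_def by (rule adjoint_linear[OF lin])
  show "linear P" unfolding P_def[abs_def] using linear_compose[OF lg lin] by (simp add: o_def)
qed

lemma g_adj: "x \<bullet> g y = f x \<bullet> y" unfolding g_def by (rule adjoint_works[OF lin])

lemma g_f[simp]: "g (f s) = s"
proof -
  have "\<forall>x. x \<bullet> (g (f s) - s) = 0" by (simp add: inner_diff_right g_adj inner_f)
  then show ?thesis by (metis inner_eq_zero_iff right_minus_eq)
qed

lemma contP: "continuous_on UNIV P" "continuous_on UNIV g" "continuous_on UNIV f"
  using linP lin by (auto simp: linear_continuous_on linear_conv_bounded_linear)

lemma projV_eq: "projV (range f) = P"
proof
  fix z
  have pr: "P z \<in> range f \<and> (\<forall>v\<in>range f. inner (z - P z) v = 0)"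
    by (auto simp: P_def inner_diff_left inner_diff_right inner_f g_adj inner_commute)
  show "projV (range f) z = P z" unfolding projV_def
  proof (rule the_equality)
    show "P z \<in> range f \<and> (\<forall>v\<in>range f. inner (z - P z) v = 0)" by (rule pr)
    fix p assume p: "p \<in> range f \<and> (\<forall>v\<in>range f. inner (z - p) v = 0)"
    then obtain a where a: "p = f a" by auto
    have "p - P z = f (a - g z)" using a by (simp add: P_def linear_diff[OF lin])
    then have "inner (z - p) (p - P z) = 0" "inner (z - P z) (p - P z) = 0" using p pr by auto
    then have "inner (p - P z) (p - P z) = 0" by (simp add: inner_diff_left inner_diff_right algebra_simps)
    then show "p = P z" by simp
  qed
qed

lemma orth_f: "u \<in> orth (range f) \<Longrightarrow> u \<bullet> f s = 0"
  by (auto simp: orth_def)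

lemma orth_g: "u \<in> orth (range f) \<Longrightarrow> g u = 0"
proof -
  assume u: "u \<in> orth (range f)"
  have "\<forall>x. x \<bullet> g u = 0" using orth_f[OF u] by (simp add: g_adj inner_commute)
  then show ?thesis by (metis inner_eq_zero_iff)
qed

lemma diff_orth: "z - P z \<in> orth (range f)"
  by (auto simp: orth_def P_def inner_diff_left inner_diff_right inner_f g_adj inner_commute)

lemma P_add: "w \<in> orth (range f) \<Longrightarrow> P (f s + w) = f s"
  using orth_g[of w] by (simp add: P_def linear_add[OF linP(1)])

lemma P_range: "P z \<in> range f" by (simp add: P_def)

lemma inner_u_P: "u \<in> orth (range f) \<Longrightarrow> u \<bullet> P z = 0"
  by (simp add: P_def orth_f)

definition S where "S = P ` K"
definition A where "A = {s. f s \<in> S}"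

lemma S_compact: "compact S"
  unfolding S_def using K(1) contP(1) by (intro compact_continuous_image) (auto intro: continuous_on_subset)

lemma A_closed: "closed A"
proof -
  have "A = f -` S" by (auto simp: A_def)
  then show ?thesis using closed_vimage[OF compact_imp_closed[OF S_compact] contP(3)] by simp
qed

lemma A_bounded: "bounded A"
proof -
  obtain B where B: "\<forall>x\<in>S. norm x \<le> B" using S_compact compact_imp_bounded bounded_iff by metis
  then show ?thesis unfolding A_def bounded_iff using iso by (intro exI[of _ B]) auto
qed

lemma A_sets[measurable]: "A \<in> sets lborel" by (simp add: borel_closed[OF A_closed])

lemma A_fin: "emeasure lborel A < \<infinity>" using A_bounded by (rule emeasure_bounded_finite)

lemma S_sets: "S \<in> sets borel" using S_compact by (auto intro: borel_closed compact_imp_closed)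

lemma f_meas: "f \<in> measurable (restrict_space lborel A) (restrict_space borel S)"
  by (rule measurable_restrict_space3) (auto simp: A_def borel_measurable_continuous_onI[OF contP(3)])

lemma set_int:
  fixes \<phi> :: "'a \<Rightarrow> 'b::{banach,second_countable_topology}"
  assumes m: "\<phi> \<in> borel_measurable (restrict_space borel S)" and b: "\<forall>x\<in>S. norm (\<phi> x) \<le> B"
  shows "set_integrable lborel A (\<lambda>s. \<phi> (f s))"
proof -
  have "(\<lambda>s. \<phi> (f s)) \<in> borel_measurable (restrict_space lborel A)"
    using measurable_compose[OF f_meas m] by (simp add: o_def)
  then have m2: "(\<lambda>s. indicator A s *\<^sub>R \<phi> (f s)) \<in> borel_measurable lborel"
    by (subst (asm) borel_measurable_restrict_space_iff) (use A_sets in auto)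
  show ?thesis unfolding set_integrable_def
    by (rule integrableI_bounded_set[where A=A and B=B]) (use m2 A_fin b A_sets in \<open>auto simp: A_def\<close>)
qed

definition Phi where "Phi u x = Sup {u \<bullet> z |z. z \<in> K \<and> P z = x}"

lemma cinner: "continuous_on UNIV (\<lambda>z. u \<bullet> (z::'a))" by (intro continuous_intros)

lemma Phi_max: "x \<in> S \<Longrightarrow> \<exists>z\<in>K. P z = x \<and> u \<bullet> z = Phi u x \<and> (\<forall>z'\<in>K. P z' = x \<longrightarrow> u \<bullet> z' \<le> u \<bullet> z)"
  using fiber_max[OF K(1) contP(1) cinner, of x u] unfolding S_def Phi_def by auto

lemma Phi_meas: "Phi u \<in> borel_measurable (restrict_space borel S)"
  using fiber_max_meas[OF K(1) contP(1) cinner[of u]] unfolding S_def Phi_def[abs_def] by simp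

lemma K_bound: obtains R where "R \<ge> 0" "\<forall>z\<in>K. norm z \<le> R"
proof -
  obtain R where "\<forall>z\<in>K. norm z \<le> R" using K(1) compact_imp_bounded bounded_iff by metis
  then show ?thesis by (intro that[of "max R 0"]) (auto intro: order_trans)
qed

lemma Phi_bound: obtains B where "\<forall>x\<in>S. norm (Phi u x) \<le> B"
proof -
  obtain R where R: "R \<ge> 0" "\<forall>z\<in>K. norm z \<le> R" by (rule K_bound)
  have "\<forall>x\<in>S. norm (Phi u x) \<le> norm u * R"
  proof
    fix x assume "x \<in> S"
    then obtain z where z: "z \<in> K" "u \<bullet> z = Phi u x" using Phi_max by blast
    have "norm (u \<bullet> z) \<le> norm u * norm z" by (simp add: Cauchy_Schwarz_ineq2)
    also have "\<dots> \<le> norm u * R" using R z by (simp add: mult_left_mono)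
    finally show "norm (Phi u x) \<le> norm u * R" using z by simp
  qed
  then show ?thesis using that by blast
qed

lemma Phi_int: "set_integrable lborel A (\<lambda>s. Phi u (f s))"
  using Phi_bound[of u] set_int[OF Phi_meas] by blast

lemma sec_int:
  assumes m: "\<gamma> \<in> borel_measurable (restrict_space borel S)"
    and sec: "\<forall>x\<in>S. \<gamma> x \<in> fiber (range f) K x"
  shows "set_integrable lborel A (\<lambda>s. \<gamma> (f s))"
proof -
  obtain R where R: "R \<ge> 0" "\<forall>z\<in>K. norm z \<le> R" by (rule K_bound)
  obtain B where B: "\<forall>x\<in>S. norm x \<le> B" using S_compact compact_imp_bounded bounded_iff by metis
  have "\<forall>x\<in>S. norm (\<gamma> x) \<le> R + B"
  proof
    fix x assume x: "x \<in> S"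
    then have "x + \<gamma> x \<in> K" using sec by (auto simp: fiber_def)
    then have "norm (x + \<gamma> x) \<le> R" using R by auto
    moreover have "norm (\<gamma> x) \<le> norm (x + \<gamma> x) + norm x" by (metis add_diff_cancel_left' norm_triangle_ineq4)
    ultimately show "norm (\<gamma> x) \<le> R + B" using B x by fastforce
  qed
  then show ?thesis by (rule set_int[OF m])
qed

lemma inner_set_int:
  assumes "set_integrable lborel A (\<lambda>s. \<gamma> (f s))"
  shows "u \<bullet> (LINT s:A|lborel. \<gamma> (f s)) = (LINT s:A|lborel. u \<bullet> \<gamma> (f s))"
  using assms unfolding set_integrable_def set_lebesgue_integral_def
  by (subst integral_inner_right[symmetric]) (auto simp: inner_scaleR_right)


lemma set_int_inner:
  assumes "set_integrable lborel A (\<lambda>s. \<gamma> (f s))"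
  shows "set_integrable lborel A (\<lambda>s. u \<bullet> \<gamma> (f s))"
proof -
  have "integrable lborel (\<lambda>s. u \<bullet> (indicator A s *\<^sub>R \<gamma> (f s)))"
    using assms unfolding set_integrable_def by (intro integrable_inner_right) auto
  then show ?thesis unfolding set_integrable_def by (simp add: inner_scaleR_right)
qed

lemma const_int: "set_integrable lborel A (\<lambda>s. c::real)"
  unfolding set_integrable_def
  by (rule integrableI_bounded_set_indicator[where B="\<bar>c\<bar>"]) (use A_fin A_sets in auto)

lemma Phi_upper: "z \<in> K \<Longrightarrow> P z = x \<Longrightarrow> u \<bullet> z \<le> Phi u x"
proof -
  assume z: "z \<in> K" "P z = x"
  then have "x \<in> S" by (auto simp: S_def)
  then obtain z0 where "z0 \<in> K" "P z0 = x" "u \<bullet> z0 = Phi u x" "\<forall>z'\<in>K. P z' = x \<longrightarrow> u \<bullet> z' \<le> u \<bullet> z0"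
    using Phi_max by blast
  then show ?thesis using z by auto
qed

lemma Tm: "u \<in> orth (range f) \<Longrightarrow> Tmap (range f) u z = (P z, u \<bullet> z)"
  by (simp add: Tmap_def projV_eq inner_diff_right inner_u_P)

lemma shadow_eq:
  assumes u: "u \<in> orth (range f)"
  shows "shadow_volume f (Tmap (range f) u ` K) = (LINT s:A|lborel. Phi u (f s))"
proof -
  have fs: "fst ` Tmap (range f) u ` K = S" using Tm[OF u] by (force simp: S_def image_image)
  have "\<And>x. {t. (x, t) \<in> Tmap (range f) u ` K} = {u \<bullet> z |z. z \<in> K \<and> P z = x}"
    using Tm[OF u] by auto
  then show ?thesis unfolding shadow_volume_def int_V_def fs Phi_def A_def by simp
qed

lemma fb_eq: "fiber_body (range f) f K =
   {(LINT s:A|lborel. \<gamma> (f s)) | \<gamma>. \<gamma> \<in> borel_measurable (restrict_space borel S) \<and> (\<forall>x\<in>S. \<gamma> x \<in> fiber (range f) K x)}"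
  unfolding fiber_body_def int_V_def projV_eq S_def A_def by simp

lemma part1:
  assumes u: "u \<in> orth (range f)"
  shows "supp_fun (fiber_body (range f) f K) u = shadow_volume f (Tmap (range f) u ` K)"
proof -
  define I where "I = (LINT s:A|lborel. Phi u (f s))"
  let ?X = "(\<lambda>x. u \<bullet> x) ` fiber_body (range f) f K"
  have upper: "\<And>y. y \<in> ?X \<Longrightarrow> y \<le> I"
  proof -
    fix y assume "y \<in> ?X"
    then obtain \<gamma> where y: "y = u \<bullet> (LINT s:A|lborel. \<gamma> (f s))"
      and m: "\<gamma> \<in> borel_measurable (restrict_space borel S)" and sec: "\<forall>x\<in>S. \<gamma> x \<in> fiber (range f) K x"
      unfolding fb_eq by blast
    have si: "set_integrable lborel A (\<lambda>s. \<gamma> (f s))" by (rule sec_int[OF m sec])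
    have "y = (LINT s:A|lborel. u \<bullet> \<gamma> (f s))" unfolding y by (rule inner_set_int[OF si])
    also have "\<dots> \<le> I" unfolding I_def
    proof (rule set_integral_mono[OF set_int_inner[OF si] Phi_int])
      fix s assume "s \<in> A"
      then have x: "f s \<in> S" by (simp add: A_def)
      then have g: "\<gamma> (f s) \<in> orth (range f)" "f s + \<gamma> (f s) \<in> K" using sec by (auto simp: fiber_def)
      have "u \<bullet> \<gamma> (f s) = u \<bullet> (f s + \<gamma> (f s))" using orth_f[OF u] by (simp add: inner_add_right)
      also have "\<dots> \<le> Phi u (f s)" using Phi_upper[OF g(2) P_add[OF g(1)]] .
      finally show "u \<bullet> \<gamma> (f s) \<le> Phi u (f s)" .
    qed
    finally show "y \<le> I" .
  qed
  obtain R where R: "R \<ge> 0" "\<forall>z\<in>K. norm z \<le> R" by (rule K_bound)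
  have lower: "\<exists>y\<in>?X. I - d * R^2 * measure lborel A \<le> y" if d: "d > 0" for d
  proof -
    define h where "h = (\<lambda>z. u \<bullet> z - d * norm z ^ 2)"
    define G where "G = selG P K h"
    have lu: "linear (\<lambda>z. u \<bullet> (z::'a))" by (rule bounded_linear.linear[OF bounded_linear_inner_right])
    have Gm: "G \<in> borel_measurable (restrict_space borel S)"
      using selG_meas[OF K(1) K(2) linP(2) lu d] unfolding G_def h_def S_def by simp
    have Gp: "\<And>x. x \<in> S \<Longrightarrow> G x \<in> K \<and> P (G x) = x \<and> (\<forall>z'\<in>K. P z' = x \<longrightarrow> h z' \<le> h (G x))"
      using selG[OF K(1) K(2) linP(2) lu d] unfolding G_def h_def S_def by simp
    define \<gamma> where "\<gamma> = (\<lambda>x. G x - x)"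
    have m: "\<gamma> \<in> borel_measurable (restrict_space borel S)"
      unfolding \<gamma>_def by (intro borel_measurable_diff Gm measurable_restrict_space1[OF measurable_ident_sets[OF refl]])
    have sec: "\<forall>x\<in>S. \<gamma> x \<in> fiber (range f) K x"
    proof
      fix x assume x: "x \<in> S"
      have "\<gamma> x = G x - P (G x)" using Gp[OF x] by (simp add: \<gamma>_def)
      then show "\<gamma> x \<in> fiber (range f) K x" using diff_orth[of "G x"] Gp[OF x]
        by (simp add: fiber_def \<gamma>_def)
    qed
    have si: "set_integrable lborel A (\<lambda>s. \<gamma> (f s))" by (rule sec_int[OF m sec])
    have elem: "u \<bullet> (LINT s:A|lborel. \<gamma> (f s)) \<in> ?X" unfolding fb_eq using m sec by blast
    have pt: "Phi u (f s) - d * R^2 \<le> u \<bullet> \<gamma> (f s)" if s: "s \<in> A" for s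
    proof -
      have x: "f s \<in> S" using s by (simp add: A_def)
      obtain z0 where z0: "z0 \<in> K" "P z0 = f s" "u \<bullet> z0 = Phi u (f s)" using Phi_max[OF x] by blast
      have hz: "h z0 \<le> h (G (f s))" using Gp[OF x] z0 by blast
      have "norm z0 ^ 2 \<le> R ^ 2" using R z0(1) by (auto intro: power_mono)
      then have "d * norm z0 ^ 2 \<le> d * R ^ 2" using d by simp
      moreover have "d * norm (G (f s)) ^ 2 \<ge> 0" using d by simp
      moreover have "u \<bullet> \<gamma> (f s) = u \<bullet> G (f s)" using orth_f[OF u] by (simp add: \<gamma>_def inner_diff_right)
      ultimately show ?thesis using hz z0(3) unfolding h_def by linarith
    qed
    have c: "(LINT s:A|lborel. d * R^2) = measure lborel A * (d * R^2)"
      using set_integral_const[of A lborel "d * R^2"] A_fin A_sets by simp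
    have "I - d * R^2 * measure lborel A = (LINT s:A|lborel. Phi u (f s)) - (LINT s:A|lborel. d * R^2)"
      unfolding I_def c by (simp add: algebra_simps)
    also have "\<dots> = (LINT s:A|lborel. Phi u (f s) - d * R^2)"
      by (rule set_integral_diff(2)[OF Phi_int const_int, symmetric])
    also have "\<dots> \<le> (LINT s:A|lborel. u \<bullet> \<gamma> (f s))"
      by (rule set_integral_mono[OF set_integral_diff(1)[OF Phi_int const_int] set_int_inner[OF si] pt])
    also have "\<dots> = u \<bullet> (LINT s:A|lborel. \<gamma> (f s))" by (rule inner_set_int[OF si, symmetric])
    finally show ?thesis using elem by blast
  qed
  have ne: "?X \<noteq> {}" using lower[of 1] by auto
  have bdd: "bdd_above ?X" using upper by (intro bdd_aboveI[of _ I]) blast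
  have "Sup ?X \<le> I" using ne upper by (rule cSup_least)
  moreover have "I \<le> Sup ?X"
  proof (rule field_le_epsilon)
    fix e :: real assume e: "e > 0"
    define d where "d = e / (R^2 * measure lborel A + 1)"
    have pos: "R^2 * measure lborel A + 1 > 0" by (simp add: add_nonneg_pos)
    have d: "d > 0" using e pos by (simp add: d_def)
    have "d * (R^2 * measure lborel A + 1) = e" using pos by (simp add: d_def)
    then have le: "d * R^2 * measure lborel A \<le> e" using d by (simp add: algebra_simps)
    obtain y where y: "y \<in> ?X" "I - d * R^2 * measure lborel A \<le> y" using lower[OF d] by blast
    have "y \<le> Sup ?X" using y(1) bdd by (rule cSup_upper)
    then show "I \<le> Sup ?X + e" using y(2) le by linarith
  qed
  ultimately have "Sup ?X = I" by simp
  then show ?thesis unfolding supp_fun_def shadow_eq[OF u] I_def by simp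
qed

lemma lborel_uminus: "distr lborel borel uminus = (lborel :: (real^'n) measure)"
  using lborel_affine[of "-1" "0::real^'n"] by (simp add: density_1)

lemma integral_reflect_lborel:
  fixes G :: "real^'n \<Rightarrow> real"
  assumes G: "integrable lborel G"
  shows "integrable lborel (\<lambda>x. G (- x))" "(LINT x|lborel. G (- x)) = (LINT x|lborel. G x)"
proof -
  have Gm: "G \<in> borel_measurable borel" using borel_measurable_integrable[OF G] by simp
  have um: "uminus \<in> measurable lborel (borel :: (real^'n) measure)" by simp
  show "integrable lborel (\<lambda>x. G (- x))"
    using integrable_distr_eq[OF um Gm] G by (simp add: lborel_uminus)
  show "(LINT x|lborel. G (- x)) = (LINT x|lborel. G x)"
    using integral_distr[OF um Gm] by (simp add: lborel_uminus)
qed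

lemma part2:
  assumes u: "u \<in> orth (range f)" and sym: "uminus ` K = K"
  shows "vol_V1 f (Tmap (range f) u ` K) = 2 * (LINT s:A|lborel. Phi u (f s))"
proof -
  have negK: "\<And>z. z \<in> K \<Longrightarrow> - z \<in> K" using sym by force
  have Pneg: "\<And>z. P (- z) = - P z" using linear_neg[OF linP(2)] by simp
  have fneg: "\<And>s. f (- s) = - f s" using linear_neg[OF lin] by simp
  have Pg: "\<And>z s. P z = f s \<longleftrightarrow> g z = s" unfolding P_def by (metis g_f)
  define C where "C = {(s, t). (f s, t) \<in> Tmap (range f) u ` K}"
  have Ceq: "C = (\<lambda>z. (g z, u \<bullet> z)) ` K"
    unfolding C_def using Tm[OF u] by (fastforce simp: P_def image_iff dest: arg_cong[where f=g])
  have Cc: "compact C" unfolding Ceq using K(1)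
    by (intro compact_continuous_image) (auto intro!: continuous_intros contP(2) intro: continuous_on_subset)
  have Cs: "C \<in> sets (lborel \<Otimes>\<^sub>M lborel)" unfolding lborel_prod using Cc by (simp add: borel_closed compact_imp_closed)
  define F where "F = (\<lambda>s. indicator A s * (Phi u (f s) + Phi u (f (- s))))"
  have Asym: "\<And>s. s \<in> A \<Longrightarrow> - s \<in> A"
  proof -
    fix s assume "s \<in> A"
    then obtain z where "z \<in> K" "P z = f s" by (auto simp: A_def S_def)
    then show "- s \<in> A" using negK[of z] Pneg[of z] fneg[of s] unfolding A_def S_def by (metis image_eqI mem_Collect_eq)
  qed
  have sect: "Pair s -` C = (if s \<in> A then {- Phi u (f (- s)) .. Phi u (f s)} else {})"
    and Fnn: "0 \<le> F s" and sectm: "emeasure lborel (Pair s -` C) = ennreal (F s)" for s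
  proof -
    have Ps: "Pair s -` C = {t. \<exists>z\<in>K. P z = f s \<and> t = u \<bullet> z}" unfolding Ceq using Pg by auto
    show sect1: "Pair s -` C = (if s \<in> A then {- Phi u (f (- s)) .. Phi u (f s)} else {})"
    proof (cases "s \<in> A")
      case False
      then show ?thesis unfolding Ps A_def S_def by (auto, metis image_eqI)
    next
      case True
      then have x: "f s \<in> S" by (simp add: A_def)
      have x2: "f (- s) \<in> S" using Asym[OF True] by (simp add: A_def)
      obtain z1 where z1: "z1 \<in> K" "P z1 = f s" "u \<bullet> z1 = Phi u (f s)" using Phi_max[OF x] by blast
      obtain z2 where z2: "z2 \<in> K" "P z2 = f (- s)" "u \<bullet> z2 = Phi u (f (- s))" using Phi_max[OF x2] by blast
      define w where "w = - z2"
      have w: "w \<in> K" "P w = f s" "u \<bullet> w = - Phi u (f (- s))"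
        using negK[OF z2(1)] z2 Pneg[of z2] fneg[of s] by (auto simp: w_def)
      have "{t. \<exists>z\<in>K. P z = f s \<and> t = u \<bullet> z} = {- Phi u (f (- s)) .. Phi u (f s)}"
      proof (rule set_eqI, rule iffI)
        fix t assume "t \<in> {t. \<exists>z\<in>K. P z = f s \<and> t = u \<bullet> z}"
        then obtain z where z: "z \<in> K" "P z = f s" and tz: "t = u \<bullet> z" by blast
        have 1: "u \<bullet> z \<le> Phi u (f s)" by (rule Phi_upper[OF z])
        have "u \<bullet> (- z) \<le> Phi u (f (- s))" using Phi_upper[OF negK[OF z(1)]] Pneg z(2) fneg by metis
        then show "t \<in> {- Phi u (f (- s)) .. Phi u (f s)}" using 1 tz by simp
      next
        fix t assume "t \<in> {- Phi u (f (- s)) .. Phi u (f s)}"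
        then have t: "- Phi u (f (- s)) \<le> t" "t \<le> Phi u (f s)" by auto
        show "t \<in> {t. \<exists>z\<in>K. P z = f s \<and> t = u \<bullet> z}"
        proof -
        let ?a = "Phi u (f s)" and ?b = "- Phi u (f (- s))"
        have "\<exists>z\<in>K. P z = f s \<and> t = u \<bullet> z"
        proof (cases "?a = ?b")
          case True
          then show ?thesis using z1 t by (intro bexI[of _ z1]) auto
        next
          case False
          then have ab: "?a - ?b > 0" using t by linarith
          define l where "l = (t - ?b) / (?a - ?b)"
          have l: "0 \<le> l" "l \<le> 1" using t ab by (auto simp: l_def field_simps)
          define z where "z = l *\<^sub>R z1 + (1 - l) *\<^sub>R w"
          have zK: "z \<in> K" using K(2) z1(1) w(1) l unfolding z_def convex_def by (metis add.commute diff_add_cancel diff_ge_0_iff_ge)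
          have "P z = l *\<^sub>R f s + (1 - l) *\<^sub>R f s"
            unfolding z_def using z1(2) w(2) linear_add[OF linP(2)] linear_scale[OF linP(2)] by metis
          then have Pz: "P z = f s" by (simp add: scaleR_left_distrib[symmetric])
          have "u \<bullet> z = l * ?a + (1 - l) * ?b" unfolding z_def using z1(3) w(3) by (simp add: inner_add_right)
          also have "\<dots> = ?b + l * (?a - ?b)" by (simp add: algebra_simps)
          also have "l * (?a - ?b) = t - ?b" using ab by (simp add: l_def)
          finally have "u \<bullet> z = t" by simp
          then show ?thesis using zK Pz by auto
        qed
        then show ?thesis by simp
        qed
      qed
      then show ?thesis using True unfolding Ps by simp
    qed
    have le: "s \<in> A \<Longrightarrow> - Phi u (f (- s)) \<le> Phi u (f s)"
    proof -
      assume sA: "s \<in> A"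
      then have x: "f s \<in> S" by (simp add: A_def)
      obtain z1 where z1: "z1 \<in> K" "P z1 = f s" "u \<bullet> z1 = Phi u (f s)" using Phi_max[OF x] by blast
      have "u \<bullet> (- z1) \<le> Phi u (f (- s))" using Phi_upper[OF negK[OF z1(1)]] Pneg z1(2) fneg by metis
      then show ?thesis using z1 by simp
    qed
    show "0 \<le> F s" using le by (auto simp: F_def indicator_def)
    show "emeasure lborel (Pair s -` C) = ennreal (F s)"
      using le by (auto simp: F_def sect1 indicator_def)
  qed
  define G where "G = (\<lambda>s. indicator A s * Phi u (f s))"
  have Gi: "integrable lborel G" using Phi_int unfolding set_integrable_def G_def by simp
  have GI: "integral\<^sup>L lborel G = (LINT s:A|lborel. Phi u (f s))" unfolding G_def set_lebesgue_integral_def by simp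
  have FG: "F = (\<lambda>s. G s + G (- s))"
  proof
    fix s
    have "indicator A (- s) = (indicator A s :: real)" using Asym[of s] Asym[of "- s"] by (auto simp: indicator_def)
    then show "F s = G s + G (- s)" by (simp add: F_def G_def algebra_simps)
  qed
  have Fi: "integrable lborel F" unfolding FG using Gi integral_reflect_lborel(1)[OF Gi] by simp
  have "vol_V1 f (Tmap (range f) u ` K) = enn2real (emeasure (lborel \<Otimes>\<^sub>M lborel) C)"
    unfolding vol_V1_def C_def measure_def by (simp add: lborel_prod)
  also have "\<dots> = enn2real (\<integral>\<^sup>+s. ennreal (F s) \<partial>lborel)"
    using lborel.emeasure_pair_measure_alt[OF Cs] sectm by simp
  also have "\<dots> = integral\<^sup>L lborel F"
    using Fnn borel_measurable_integrable[OF Fi] by (intro enn2real_nn_integral_eq_integral) auto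
  also have "\<dots> = integral\<^sup>L lborel G + (LINT s|lborel. G (- s))"
    unfolding FG using Gi integral_reflect_lborel(1)[OF Gi] by simp
  also have "\<dots> = 2 * (LINT s:A|lborel. Phi u (f s))" using integral_reflect_lborel(2)[OF Gi] GI by simp
  finally show ?thesis .
qed

end

theorem mainTheorem13:
  fixes f :: "real^'n \<Rightarrow> 'a::euclidean_space" and V K :: "'a set"
  assumes "linear f" and "\<forall>x. norm (f x) = norm x" and "V = range f"
    and "convex_body K"
  shows "(\<forall>u\<in>orth V. supp_fun (fiber_body V f K) u = shadow_volume f (Tmap V u ` K)) \<and>
         (uminus ` K = K \<longrightarrow>
            (\<forall>u\<in>orth V. supp_fun (fiber_body V f K) u = 1/2 * vol_V1 f (Tmap V u ` K)))"
proof -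
  interpret fbs f K using assms by (simp add: fbs_def)
  show ?thesis
  proof (intro conjI ballI impI)
    fix u assume "u \<in> orth V"
    then show "supp_fun (fiber_body V f K) u = shadow_volume f (Tmap V u ` K)"
      using part1 assms(3) by simp
  next
    fix u assume s: "uminus ` K = K" and u: "u \<in> orth V"
    show "supp_fun (fiber_body V f K) u = 1/2 * vol_V1 f (Tmap V u ` K)"
      using part1[of u] shadow_eq[of u] part2[of u] u s assms(3) by simp
  qed
qed

end
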